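(* Let $K\ge 1$ and fix an index $j\in\{1,\dots,K\}$. Let $\eta_1\in(0,1]$, $\eta_2\in(0,1]$, $P>0$, $\sigma_b^2>0$, $\sigma_D^2>0$, and for each $k\in\{1,\dots,K\}$ let $h_k,g_k\in\mathbb{C}\setminus\{0\}$ and $v_k\in\mathbb{R}$ with $v_k\ge -\eta_1\eta_2P|h_k|^2$. Define $$a_k=P|h_k|^2+\max\Big\{0,\frac{v_k}{\eta_1}\Big\}+\min\Big\{0,\frac{v_k}{\eta_1\eta_2}\Big\}+\sigma_b^2,$$ $$U_k=\Big(1+\min\Big\{0,\frac{v_k}{\eta_1\eta_2P|h_k|^2}\Big\}\Big)P|h_k|^2+\sigma_b^2 .$$ Fix values $x_k\in[\sigma_b^2,U_k]$ for all $k\neq j$, and for $x_j\in[\sigma_b^2,U_j]$ define $$F_1(x_j)=\Big(\sqrt{\eta_1|g_j|^2(a_j-x_j)\big(1-\tfrac{\sigma_b^2}{x_j}\big)}+\sum_{k\neq j}\sqrt{\eta_1|g_k|^2(a_k-x_k)\big(1-\tfrac{\sigma_b^2}{x_k}\big)}\Big)^2,$$ $$F_2(x_j)=\eta_1|g_j|^2(a_j-x_j)\frac{\sigma_b^2}{x_j}+\sum_{k\neq j}\eta_1|g_k|^2(a_k-x_k)\frac{\sigma_b^2}{x_k}+\sigma_D^2 .$$ Then for every $q\ge 0$ the function $x_j\mapsto F_1(x_j)-qF_2(x_j)$ is concave on $[\sigma_b^2,U_j]$.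
   Context: This is the per-coordinate subproblem arising in maximizing the end-to-end SNR of a wireless-powered amplify-and-forward relay network with power splitting: $x_k=\lambda_{k,I}P|h_k|^2+\sigma_b^2$ where $\lambda_{k,I}$ is the power-splitting ratio for information at relay $k$, $v_k$ is the battery energy-level variation, $h_k,g_k$ are source–relay and relay–destination channel gains, $\eta_1$ the energy conversion efficiency, $\eta_2$ the storage efficiency. In the paper the parameter $q$ is a value of the ratio $F_1/F_2$, hence nonnegative. *)

theory Defs
  imports "HOL-Analysis.Analysis"
begin

text \<open>sb2 stands for sigma_b^2 (the relay noise variance), sD2 for sigma_D^2.\<close>

definition a_coef :: "real \<Rightarrow> real \<Rightarrow> real \<Rightarrow> real \<Rightarrow> complex \<Rightarrow> real \<Rightarrow> real" where
  "a_coef eta1 eta2 P sb2 h v =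
     P * (cmod h)^2 + max 0 (v / eta1) + min 0 (v / (eta1 * eta2)) + sb2"

definition U_bound :: "real \<Rightarrow> real \<Rightarrow> real \<Rightarrow> real \<Rightarrow> complex \<Rightarrow> real \<Rightarrow> real" where
  "U_bound eta1 eta2 P sb2 h v =
     (1 + min 0 (v / (eta1 * eta2 * P * (cmod h)^2))) * P * (cmod h)^2 + sb2"

end

theory Submission
  imports Defs
begin

lemma concave_on_cong_pt:
  assumes "concave_on S f" "\<And>x. x \<in> S \<Longrightarrow> f x = f' x"
  shows "concave_on S f'"
proof -
  have cS: "convex S" using assms(1) concave_on_imp_convex by blast
  show ?thesis unfolding concave_on_iff
  proof (intro conjI cS ballI allI impI)
    fix x y u v assume xy: "x \<in> S" "y \<in> S" and uv: "0 \<le> (u::real)" "0 \<le> v" "u + v = 1"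
    have "u *\<^sub>R x + v *\<^sub>R y \<in> S" using cS xy uv by (simp add: convex_def)
    with assms xy uv show "u * f' x + v * f' y \<le> f' (u *\<^sub>R x + v *\<^sub>R y)"
      unfolding concave_on_iff by metis
  qed
qed

lemma concave_sqrt_comp:
  fixes S :: "real set"
  assumes "concave_on S g" "\<And>x. x \<in> S \<Longrightarrow> g x \<ge> 0"
  shows "concave_on S (\<lambda>x. sqrt (g x))"
proof -
  have cS: "convex S" using assms(1) concave_on_imp_convex by blast
  show ?thesis unfolding concave_on_iff
  proof (intro conjI cS ballI allI impI)
    fix x y u v assume xy: "x \<in> S" "y \<in> S" and uv: "0 \<le> (u::real)" "0 \<le> v" "u + v = 1"
    have "u * g x + v * g y \<le> g (u *\<^sub>R x + v *\<^sub>R y)"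
      using assms(1) xy uv unfolding concave_on_iff by blast
    hence 1: "sqrt (u * g x + v * g y) \<le> sqrt (g (u *\<^sub>R x + v *\<^sub>R y))"
      by (rule real_sqrt_le_mono)
    define a where "a = sqrt (g x)"
    define b where "b = sqrt (g y)"
    have a0: "a \<ge> 0" "b \<ge> 0" using assms(2) xy a_def b_def by auto
    have ga: "g x = a^2" "g y = b^2" using assms(2) xy a_def b_def by auto
    have "(u * a + v * b)^2 \<le> u * a^2 + v * b^2"
    proof -
      have vu: "v = 1 - u" using uv by simp
      have "u * a^2 + v * b^2 - (u * a + v * b)^2 = u * v * (a - b)^2"
        unfolding vu by (simp add: power2_eq_square algebra_simps)
      moreover have "u * v * (a - b)^2 \<ge> 0" using uv by simp
      ultimately show ?thesis by linarith
    qed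
    hence "u * a + v * b \<le> sqrt (u * g x + v * g y)"
      using ga a0 uv by (metis real_le_rsqrt)
    from order_trans[OF this 1]
    show "u * sqrt (g x) + v * sqrt (g y) \<le> sqrt (g (u *\<^sub>R x + v *\<^sub>R y))"
      by (simp add: a_def b_def)
  qed
qed

lemma U_le_a:
  assumes "P > 0" "h \<noteq> 0" "eta1 > 0" "eta2 > 0"
  shows "U_bound eta1 eta2 P sb2 h v \<le> a_coef eta1 eta2 P sb2 h v"
proof -
  have H: "P * (cmod h)^2 > 0" using assms by simp
  show ?thesis
  proof (cases "v \<ge> 0")
    case True
    have "v / (eta1 * eta2 * P * (cmod h)^2) \<ge> 0" using True H assms by simp
    moreover have "v / (eta1 * eta2) \<ge> 0" "v / eta1 \<ge> 0" using True assms by simp_all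
    ultimately show ?thesis unfolding U_bound_def a_coef_def by simp
  next
    case False
    have "v / (eta1 * eta2 * P * (cmod h)^2) < 0"
      using False H assms by (simp add: divide_neg_pos mult.assoc)
    moreover have "v / (eta1 * eta2) < 0" "v / eta1 < 0" using False assms
      by (simp_all add: divide_neg_pos)
    moreover have "(1 + v / (eta1 * eta2 * P * (cmod h)^2)) * P * (cmod h)^2
        = P * (cmod h)^2 + v / (eta1 * eta2)"
      using H assms by (simp add: field_simps)
    ultimately show ?thesis unfolding U_bound_def a_coef_def by simp
  qed
qed

theorem lemma2:
  fixes K j :: nat and eta1 eta2 P sb2 sD2 q :: real
    and h g :: "nat \<Rightarrow> complex" and v x :: "nat \<Rightarrow> real"
  assumes "K \<ge> 1" and "j \<in> {1..K}"
    and "0 < eta1" "eta1 \<le> 1" "0 < eta2" "eta2 \<le> 1"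
    and "P > 0" "sb2 > 0" "sD2 > 0"
    and "\<forall>k\<in>{1..K}. h k \<noteq> 0 \<and> g k \<noteq> 0"
    and "\<forall>k\<in>{1..K}. v k \<ge> - eta1 * eta2 * P * (cmod (h k))^2"
    and "\<forall>k\<in>{1..K} - {j}. sb2 \<le> x k \<and> x k \<le> U_bound eta1 eta2 P sb2 (h k) (v k)"
    and "q \<ge> 0"
  shows "concave_on {sb2 .. U_bound eta1 eta2 P sb2 (h j) (v j)}
    (\<lambda>t. (sqrt (eta1 * (cmod (g j))^2 * (a_coef eta1 eta2 P sb2 (h j) (v j) - t) * (1 - sb2 / t))
           + (\<Sum>k\<in>{1..K} - {j}. sqrt (eta1 * (cmod (g k))^2 * (a_coef eta1 eta2 P sb2 (h k) (v k) - x k) * (1 - sb2 / x k))))^2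
         - q * (eta1 * (cmod (g j))^2 * (a_coef eta1 eta2 P sb2 (h j) (v j) - t) * (sb2 / t)
           + (\<Sum>k\<in>{1..K} - {j}. eta1 * (cmod (g k))^2 * (a_coef eta1 eta2 P sb2 (h k) (v k) - x k) * (sb2 / x k))
           + sD2))"
proof (cases "sb2 \<le> U_bound eta1 eta2 P sb2 (h j) (v j)")
  case False
  hence "{sb2 .. U_bound eta1 eta2 P sb2 (h j) (v j)} = {}" by simp
  thus ?thesis by (simp add: concave_on_iff)
next
  case True
  define s where "s = sb2"
  define U where "U = U_bound eta1 eta2 P sb2 (h j) (v j)"
  define A where "A = a_coef eta1 eta2 P sb2 (h j) (v j)"
  define c where "c = eta1 * (cmod (g j))^2"
  define S where "S = (\<Sum>k\<in>{1..K} - {j}. sqrt (eta1 * (cmod (g k))^2 * (a_coef eta1 eta2 P sb2 (h k) (v k) - x k) * (1 - sb2 / x k)))"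
  define R where "R = (\<Sum>k\<in>{1..K} - {j}. eta1 * (cmod (g k))^2 * (a_coef eta1 eta2 P sb2 (h k) (v k) - x k) * (sb2 / x k))"
  define I where "I = {s..U}"
  have UA: "U \<le> A" unfolding U_def A_def using U_le_a assms by auto
  have sU: "s \<le> U" using True s_def U_def by simp
  have s0: "s > 0" using assms s_def by simp
  have c0: "c \<ge> 0" using c_def assms by simp
  have A0: "A * s \<ge> 0" using UA sU s0 by simp
  have S0: "S \<ge> 0" unfolding S_def
  proof (rule sum_nonneg)
    fix k assume k: "k \<in> {1..K} - {j}"
    have "U_bound eta1 eta2 P sb2 (h k) (v k) \<le> a_coef eta1 eta2 P sb2 (h k) (v k)"
      using U_le_a assms k by auto
    moreover have "sb2 \<le> x k" "x k \<le> U_bound eta1 eta2 P sb2 (h k) (v k)" using assms k by auto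
    ultimately have "a_coef eta1 eta2 P sb2 (h k) (v k) - x k \<ge> 0" "1 - sb2 / x k \<ge> 0"
      using assms by auto
    thus "0 \<le> sqrt (eta1 * (cmod (g k))^2 * (a_coef eta1 eta2 P sb2 (h k) (v k) - x k) * (1 - sb2 / x k))"
      using assms by simp
  qed
  define G where "G = (\<lambda>t. c * ((A + s - t) - (A * s) * inverse t))"
  have Ipos: "I \<subseteq> {0<..}" using s0 I_def by auto
  have cI: "convex I" unfolding I_def by (rule convex_real_interval)
  have cG: "concave_on I G" unfolding G_def
  proof (rule concave_on_cmul[OF c0])
    have "concave_on I (\<lambda>t. (A + s) - t)"
      by (rule concave_on_diff) (simp_all add: concave_on_const convex_on_ident cI)
    moreover have "convex_on I (\<lambda>t. (A * s) * inverse t)"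
      by (rule convex_on_cmul[OF A0]) (rule convex_on_inverse[OF Ipos cI])
    ultimately show "concave_on I (\<lambda>t. (A + s - t) - (A * s) * inverse t)"
      by (rule concave_on_diff)
  qed
  have Gnn: "G t \<ge> 0" and Geq: "c * (A - t) * (1 - s / t) = G t" if t: "t \<in> I" for t
  proof -
    have tp: "t > 0" "s \<le> t" "t \<le> A" using t I_def s0 UA by auto
    show "c * (A - t) * (1 - s / t) = G t" unfolding G_def using tp
      by (simp add: field_simps)
    moreover have "c * (A - t) * (1 - s / t) \<ge> 0" using tp c0 by simp
    ultimately show "G t \<ge> 0" by simp
  qed
  have cH: "concave_on I (\<lambda>t. sqrt (G t))" by (rule concave_sqrt_comp[OF cG Gnn])
  define F where "F = (\<lambda>t. ((G t + (2 * S) * sqrt (G t)) + S^2) - q * ((c * A * s) * inverse t + (R + sD2 - c * s)))"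
  have cF: "concave_on I F" unfolding F_def
  proof (rule concave_on_diff)
    show "concave_on I (\<lambda>t. (G t + (2 * S) * sqrt (G t)) + S^2)"
      by (intro concave_on_add cG concave_on_cmul cH) (use S0 cI in \<open>simp_all add: concave_on_const\<close>)
    have "convex_on I (\<lambda>t. (c * A * s) * inverse t + (R + sD2 - c * s))"
      by (intro convex_on_add convex_on_cmul convex_on_inverse[OF Ipos cI])
         (use c0 A0 cI in \<open>simp_all add: convex_on_const mult.assoc\<close>)
    thus "convex_on I (\<lambda>t. q * ((c * A * s) * inverse t + (R + sD2 - c * s)))"
      using assms by (intro convex_on_cmul) auto
  qed
  show ?thesis
  proof (rule concave_on_cong_pt[OF cF[unfolded I_def U_def s_def]])
    fix t assume t: "t \<in> {sb2..U_bound eta1 eta2 P sb2 (h j) (v j)}"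
    hence tI: "t \<in> I" using I_def U_def s_def by simp
    have tp: "t > 0" using tI I_def s0 by auto
    have e1: "sqrt (G t)^2 = G t" using Gnn[OF tI] by simp
    have e2: "c * (A - t) * (s / t) = (c * A * s) * inverse t - c * s"
      using tp by (simp add: field_simps)
    show "F t = (sqrt (eta1 * (cmod (g j))^2 * (a_coef eta1 eta2 P sb2 (h j) (v j) - t) * (1 - sb2 / t))
           + (\<Sum>k\<in>{1..K} - {j}. sqrt (eta1 * (cmod (g k))^2 * (a_coef eta1 eta2 P sb2 (h k) (v k) - x k) * (1 - sb2 / x k))))^2
         - q * (eta1 * (cmod (g j))^2 * (a_coef eta1 eta2 P sb2 (h j) (v j) - t) * (sb2 / t)
           + (\<Sum>k\<in>{1..K} - {j}. eta1 * (cmod (g k))^2 * (a_coef eta1 eta2 P sb2 (h k) (v k) - x k) * (sb2 / x k))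
           + sD2)"
      unfolding S_def[symmetric] R_def[symmetric]
      unfolding c_def[symmetric] A_def[symmetric]
      unfolding s_def[symmetric]
      unfolding Geq[OF tI] e2 F_def
      by (simp only: power2_sum e1) (simp add: algebra_simps)
  qed
qed

end
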